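(* Let $a,g,h$ be positive integers with $\sigma(a)\neq 2a$, and let $b,c$ be coprime integers with $c>0$ and $\dfrac{b}{c}=\dfrac{a}{2a-\sigma(a)}$. Let $m,n$ be coprime positive integers with $\dfrac{\sigma(g)}{\sigma(h)}=\dfrac{m}{n}$, and put $e=b(mh+ng)-(2b-c)m\,\sigma(h)$, assumed nonzero. Let $x,y$ be positive integers with $$(ex-nbg)(ey-nbg)=n^2b^2g^2+nb(h-g)e,$$ and put $p=x-1$, $q=y-1$, $r=\frac{m}{n}xy-1$. Suppose $p,q,r$ are primes with $p\neq q$, and that the factors are relatively prime: $a,g,p,q$ are pairwise coprime and $a,h,r$ are pairwise coprime. Then $agpq$ and $ahr$ are amicable numbers.
   Context: For a positive integer $N$, $\sigma(N)$ denotes the sum of all positive divisors of $N$. Positive integers $M,N$ are amicable if $\sigma(M)-M=N$ and $\sigma(N)-N=M$. *)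

theory Defs
  imports Complex_Main "HOL-Computational_Algebra.Primes"
begin

definition sigma :: "nat \<Rightarrow> nat" where
  "sigma N = (\<Sum>d\<in>{d. d dvd N}. d)"

definition amicable :: "nat \<Rightarrow> nat \<Rightarrow> bool" where
  "amicable M N \<longleftrightarrow> M > 0 \<and> N > 0 \<and>
     int (sigma M) - int M = int N \<and> int (sigma N) - int N = int M"

end

theory Submission imports Defs begin
lemma fin_div: "(N::nat) > 0 \<Longrightarrow> finite {d. d dvd N}"
  by (simp add: finite_divisors_nat)
lemma gcd_fact: assumes "coprime m (n::nat)" "u dvd m" "v dvd n" shows "gcd (u * v) m = u"
proof -
  have "coprime m v" using coprime_divisors[OF dvd_refl assms(3) assms(1)] .
  hence "gcd (u * v) m = gcd u m" by (rule gcd_mult_left_right_cancel)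
  also have "\<dots> = u" using assms(2) by (simp add: gcd_nat.absorb1)
  finally show ?thesis .
qed

lemma sigma_mult:
  assumes "coprime m n" "(m::nat) > 0" "n > 0"
  shows "sigma (m * n) = sigma m * sigma n"
proof -
  let ?A = "{d. d dvd m}" and ?B = "{d. d dvd n}"
  have fA: "finite ?A" and fB: "finite ?B" using assms fin_div by auto
  have "sigma m * sigma n = (\<Sum>d1\<in>?A. \<Sum>d2\<in>?B. d1 * d2)"
    unfolding sigma_def by (simp add: sum_product)
  also have "\<dots> = (\<Sum>z\<in>?A \<times> ?B. fst z * snd z)"
    by (simp add: sum.cartesian_product case_prod_beta)
  also have "\<dots> = (\<Sum>d\<in>{d. d dvd m * n}. d)"
  proof (rule sum.reindex_bij_betw)
    show "bij_betw (\<lambda>z. fst z * snd z) (?A \<times> ?B) {d. d dvd m * n}"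
      unfolding bij_betw_def
    proof
      show "inj_on (\<lambda>z. fst z * snd z) (?A \<times> ?B)"
      proof (rule inj_onI)
        fix z w assume z: "z \<in> ?A \<times> ?B" and w: "w \<in> ?A \<times> ?B"
          and eq: "fst z * snd z = fst w * snd w"
        obtain z1 z2 where zz: "z = (z1, z2)" by (cases z)
        obtain w1 w2 where ww: "w = (w1, w2)" by (cases w)
        have d: "z1 dvd m" "z2 dvd n" "w1 dvd m" "w2 dvd n" using z w zz ww by auto
        have cn: "coprime n m" using assms(1) by (simp add: coprime_commute)
        have e: "z1 * z2 = w1 * w2" using eq zz ww by simp
        have "z1 = w1" using gcd_fact[OF assms(1) d(1,2)] gcd_fact[OF assms(1) d(3,4)] e by simp
        moreover have "z2 = w2" using gcd_fact[OF cn d(2,1)] gcd_fact[OF cn d(4,3)] e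
          by (simp add: mult.commute)
        ultimately show "z = w" using zz ww by simp
      qed
      show "(\<lambda>z. fst z * snd z) ` (?A \<times> ?B) = {d. d dvd m * n}"
      proof
        show "(\<lambda>z. fst z * snd z) ` (?A \<times> ?B) \<subseteq> {d. d dvd m * n}"
          by (auto intro: mult_dvd_mono)
        show "{d. d dvd m * n} \<subseteq> (\<lambda>z. fst z * snd z) ` (?A \<times> ?B)"
        proof
          fix d assume "d \<in> {d. d dvd m * n}"
          then obtain u v where "d = u * v" "u dvd m" "v dvd n"
            using division_decomp by blast
          thus "d \<in> (\<lambda>z. fst z * snd z) ` (?A \<times> ?B)"
            by (auto intro!: image_eqI[of _ _ "(u, v)"])
        qed
      qed
    qed
  qed
  finally show ?thesis unfolding sigma_def by simp
qed
lemma sigma_pos: assumes "(N::nat) > 0" shows "sigma N > 0"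
proof -
  have "1 \<le> (\<Sum>d\<in>{d. d dvd N}. d)"
    using member_le_sum[of 1 "{d. d dvd N}" "\<lambda>d. d"] fin_div[OF assms] by auto
  thus ?thesis unfolding sigma_def by simp
qed

lemma sigma_prime: assumes "prime (p::nat)" shows "sigma p = p + 1"
proof -
  have "{d. d dvd p} = {1, p}" using assms prime_nat_iff by auto
  moreover have "p \<noteq> 1" using assms by auto
  ultimately show ?thesis unfolding sigma_def by simp
qed



theorem mainTheorem10:
  fixes a g h m n x y p q r :: nat and b c e :: int
  assumes pos: "a > 0" "g > 0" "h > 0"
    and not_perfect: "sigma a \<noteq> 2 * a"
    and bc: "coprime b c" "c > 0"
    and bc_eq: "rat_of_int b / rat_of_int c = of_nat a / (2 * of_nat a - of_nat (sigma a))"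
    and mn: "coprime m n" "m > 0" "n > 0"
    and mn_eq: "rat_of_nat (sigma g) / rat_of_nat (sigma h) = rat_of_nat m / rat_of_nat n"
    and e_def: "e = b * (int m * int h + int n * int g) - (2 * b - c) * int m * int (sigma h)"
    and e_nz: "e \<noteq> 0"
    and xy: "x > 0" "y > 0"
    and eqn: "(e * int x - int n * b * int g) * (e * int y - int n * b * int g)
              = (int n)^2 * b^2 * (int g)^2 + int n * b * (int h - int g) * e"
    and p_def: "p = x - 1" and q_def: "q = y - 1"
    and r_def: "rat_of_nat r = rat_of_nat m / rat_of_nat n * rat_of_nat x * rat_of_nat y - 1"
    and primes: "prime p" "prime q" "prime r" "p \<noteq> q"
    and cop1: "coprime a g" "coprime a p" "coprime a q" "coprime g p" "coprime g q" "coprime p q"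
    and cop2: "coprime a h" "coprime a r" "coprime h r"
  shows "amicable (a * g * p * q) (a * h * r)"
proof -
  have pp: "p > 0" "q > 0" "r > 0" using primes prime_gt_0_nat by auto
  have s1: "sigma (a * g * p * q) = sigma a * sigma g * (p + 1) * (q + 1)"
  proof -
    have "coprime (a * g * p) q" using cop1 by simp
    moreover have "coprime (a * g) p" using cop1 by simp
    ultimately show ?thesis using pos pp cop1 primes
      by (simp add: sigma_mult sigma_prime)
  qed
  have s2: "sigma (a * h * r) = sigma a * sigma h * (r + 1)"
  proof -
    have "coprime (a * h) r" using cop2 by simp
    thus ?thesis using pos pp cop2 primes
      by (simp add: sigma_mult sigma_prime)
  qed
  define S where "S = rat_of_nat (sigma a)"
  define Sg where "Sg = rat_of_nat (sigma g)"
  define Sh where "Sh = rat_of_nat (sigma h)"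
  define X where "X = rat_of_nat x"
  define Y where "Y = rat_of_nat y"
  have Shpos: "Sh > 0" unfolding Sh_def using sigma_pos pos by simp
  have nz: "rat_of_nat n \<noteq> 0" using mn by simp
  have SgSh: "Sg * of_nat n = Sh * of_nat m"
    using mn_eq Shpos nz unfolding Sg_def Sh_def by (simp add: field_simps)
  have den: "2 * rat_of_nat a - S \<noteq> 0"
  proof
    assume "2 * rat_of_nat a - S = 0"
    hence "rat_of_nat (sigma a) = rat_of_nat (2 * a)" unfolding S_def by simp
    hence "sigma a = 2 * a" using of_nat_eq_iff by blast
    thus False using not_perfect by simp
  qed
  have cnz: "rat_of_int c \<noteq> 0" using bc by simp
  have bS: "of_int b * S = of_nat a * (2 * of_int b - of_int c)"
  proof -
    have "of_int b * (2 * rat_of_nat a - S) = of_int c * of_nat a"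
      using bc_eq den cnz unfolding S_def by (simp add: field_simps)
    thus ?thesis by (simp add: algebra_simps)
  qed
  have bnz: "b \<noteq> 0"
  proof
    assume "b = 0"
    hence "rat_of_int c * of_nat a = 0" using bS by auto
    thus False using cnz pos by simp
  qed
  have key_int: "e * int x * int y - int n * b * int g * (int x + int y) + int n * b * (int g - int h) = 0"
  proof -
    have "e * (e * int x * int y - int n * b * int g * (int x + int y) + int n * b * (int g - int h)) = 0"
      using eqn by (simp add: algebra_simps power2_eq_square)
    thus ?thesis using e_nz by simp
  qed
  have key: "of_int e * X * Y - of_nat n * of_int b * of_nat g * (X + Y) + of_nat n * of_int b * (of_nat g - of_nat h) = (0::rat)"
  proof -
    have "rat_of_int (e * int x * int y - int n * b * int g * (int x + int y) + int n * b * (int g - int h)) = 0"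
      using key_int by simp
    thus ?thesis unfolding X_def Y_def by simp
  qed
  have eR: "of_int e = of_int b * (of_nat m * of_nat h + of_nat n * of_nat g) - (2 * of_int b - of_int c) * of_nat m * Sh"
    unfolding Sh_def e_def by simp
  have P: "rat_of_nat p = X - 1" and Q: "rat_of_nat q = Y - 1"
    using xy unfolding p_def q_def X_def Y_def by (simp_all add: of_nat_diff)
  have R: "rat_of_nat r = of_nat m * X * Y / of_nat n - 1"
    using r_def unfolding X_def Y_def by simp
  have goal1: "S * Sg * X * Y = of_nat a * of_nat g * (X - 1) * (Y - 1) + of_nat a * of_nat h * (of_nat m * X * Y / of_nat n - 1)"
  proof -
    have bn: "rat_of_int b * of_nat n \<noteq> 0" using bnz nz by simp
    have "(of_int b * of_nat n) * (S * Sg * X * Y) = (of_int b * S) * (Sg * of_nat n) * X * Y"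
      by (simp add: algebra_simps)
    also have "\<dots> = of_nat a * (2 * of_int b - of_int c) * (Sh * of_nat m) * X * Y"
      using bS SgSh by simp
    also have "\<dots> = (of_int b * of_nat n) * (of_nat a * of_nat g * (X - 1) * (Y - 1) + of_nat a * of_nat h * (of_nat m * X * Y / of_nat n - 1))"
    proof -
      have "of_nat a * (2 * of_int b - of_int c) * (Sh * of_nat m) * X * Y
          - (of_int b * of_nat n) * (of_nat a * of_nat g * (X - 1) * (Y - 1) + of_nat a * of_nat h * (of_nat m * X * Y / of_nat n - 1))
          = - of_nat a * (of_int e * X * Y - of_nat n * of_int b * of_nat g * (X + Y) + of_nat n * of_int b * (of_nat g - of_nat h))"
        using nz unfolding eR by (simp add: field_simps)
      thus ?thesis using key by simp
    qed
    finally show ?thesis using bn by simp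
  qed
  have goal2: "S * Sh * (of_nat m * X * Y / of_nat n) = S * Sg * X * Y"
    using SgSh nz by (simp add: field_simps)
  have L1: "rat_of_nat (sigma (a * g * p * q)) = S * Sg * X * Y"
    unfolding s1 by (simp add: P Q S_def Sg_def algebra_simps)
  have L2: "rat_of_nat (sigma (a * h * r)) = S * Sh * (of_nat m * X * Y / of_nat n)"
    unfolding s2 by (simp add: R S_def Sh_def algebra_simps)
  have RR: "rat_of_nat (a * g * p * q) + of_nat (a * h * r) = of_nat a * of_nat g * (X - 1) * (Y - 1) + of_nat a * of_nat h * (of_nat m * X * Y / of_nat n - 1)"
    by (simp add: P Q R)
  have E1: "rat_of_nat (sigma (a * g * p * q)) = of_nat (a * g * p * q) + of_nat (a * h * r)"
    using L1 RR goal1 by simp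
  have E2: "rat_of_nat (sigma (a * h * r)) = of_nat (a * g * p * q) + of_nat (a * h * r)"
    using L2 RR goal1 goal2 by simp
  have I1: "sigma (a * g * p * q) = a * g * p * q + a * h * r"
    using E1 by (metis of_nat_add of_nat_eq_iff)
  have I2: "sigma (a * h * r) = a * g * p * q + a * h * r"
    using E2 by (metis of_nat_add of_nat_eq_iff)
  show ?thesis unfolding amicable_def using I1 I2 pos pp by simp
qed

end
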